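(* Let $n$ be a prime, let $\alpha$ be a primitive element of $\mathbb{F}_{2^n}$, identify $\mathbb{F}_2^n$ with $\mathbb{F}_{2^n}$ as $\mathbb{F}_2$-vector spaces, and let $k\ge 2$. Suppose there exists a Steiner structure $\mathbb{S}_2[2,k,n]$ formed by $\frac{2^n-2}{(2^k-1)(2^k-2)n}$ pairwise disjoint coset complete $k$-dimensional subspaces $X_1,\dots,X_N$ (meaning that the set of all subspaces $\alpha^j X_i^{2^\ell}=\{\alpha^j x^{2^\ell}: x\in X_i\}$, $1\le i\le N$, $0\le \ell\le n-1$, $0\le j\le 2^n-2$, is a Steiner structure $\mathbb{S}_2[2,k,n]$). Then there exists a $(2^n-1,2^k-1,1)$ difference family over the group $\mathbb{Z}_{2^n-1}$.
   Context: For $s\in\mathbb{Z}_{2^n-1}$, the cyclotomic coset of $s$ is $C_s=\{s\cdot 2^i \bmod (2^n-1): 0\le i\le n-1\}$ and $\rho(s)=\min C_s$. For a $k$-dimensional subspace $X=\{0,\alpha^{i_1},\dots,\alpha^{i_{2^k-1}}\}$ (exponents in $\mathbb{Z}_{2^n-1}$), $\rho(\Delta(X))=\{\rho(i_r-i_s): r\ne s\}$; $X$ is coset complete if $|\rho(\Delta(X))|=(2^k-1)(2^k-2)$, and coset complete $X,Y$ are disjoint if $\rho(\Delta(X))\cap\rho(\Delta(Y))=\varnothing$. A Steiner structure $\mathbb{S}_2[2,k,n]$ is a set of $k$-dimensional subspaces of $\mathbb{F}_2^n$ such that every $2$-dimensional subspace is contained in exactly one of them. An $(m,w,\lambda)$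 difference family over an additive group $G$ with $|G|=m$ is a set of $w$-subsets of $G$ such that each element of $G\setminus\{0\}$ occurs exactly $\lambda$ times as a difference $a-b$ of two distinct elements $a,b$ lying in a common subset of the family. *)

theory Defs
  imports "HOL-Computational_Algebra.Primes" "HOL-Library.Cardinality"
begin

text \<open>The field F_{2^n} is modelled by a finite field type 'a of cardinality 2^n and
characteristic 2. F_2-subspaces of it (as an F_2-vector space) are exactly the subsets
containing 0 and closed under addition; such a subspace has dimension k iff it has 2^k
elements.\<close>

definition f2_subspace :: "'a::field set \<Rightarrow> bool" where
  "f2_subspace V \<longleftrightarrow> 0 \<in> V \<and> (\<forall>x\<in>V. \<forall>y\<in>V. x + y \<in> V)"

definition f2_subspace_dim :: "'a::{field,finite} set \<Rightarrow> nat \<Rightarrow> bool" where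
  "f2_subspace_dim V k \<longleftrightarrow> f2_subspace V \<and> card V = 2 ^ k"

definition steiner_structure :: "nat \<Rightarrow> 'a::{field,finite} set set \<Rightarrow> bool" where
  "steiner_structure k S \<longleftrightarrow>
     (\<forall>X\<in>S. f2_subspace_dim X k) \<and>
     (\<forall>W. f2_subspace_dim W 2 \<longrightarrow> (\<exists>!X. X \<in> S \<and> W \<subseteq> X))"

definition primitive_elem :: "'a::field \<Rightarrow> bool" where
  "primitive_elem \<alpha> \<longleftrightarrow> \<alpha> \<noteq> 0 \<and> (\<forall>y. y \<noteq> 0 \<longrightarrow> (\<exists>i::nat. y = \<alpha> ^ i))"

definition cyc_rho :: "nat \<Rightarrow> nat \<Rightarrow> nat" where
  "cyc_rho n s = Min {(s * 2 ^ i) mod (2 ^ n - 1) | i. i < n}"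

definition exps :: "nat \<Rightarrow> 'a::field \<Rightarrow> 'a set \<Rightarrow> nat set" where
  "exps n \<alpha> X = {i. i < 2 ^ n - 1 \<and> \<alpha> ^ i \<in> X}"

definition rho_Delta :: "nat \<Rightarrow> 'a::field \<Rightarrow> 'a set \<Rightarrow> nat set" where
  "rho_Delta n \<alpha> X =
     {cyc_rho n (nat ((int i - int j) mod (2 ^ n - 1))) | i j.
        i \<in> exps n \<alpha> X \<and> j \<in> exps n \<alpha> X \<and> i \<noteq> j}"

definition coset_complete :: "nat \<Rightarrow> nat \<Rightarrow> 'a::field \<Rightarrow> 'a set \<Rightarrow> bool" where
  "coset_complete n k \<alpha> X \<longleftrightarrow> card (rho_Delta n \<alpha> X) = (2 ^ k - 1) * (2 ^ k - 2)"

definition difference_family :: "nat \<Rightarrow> nat \<Rightarrow> nat \<Rightarrow> nat set set \<Rightarrow> bool" where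
  "difference_family m w lam F \<longleftrightarrow>
     finite F \<and> (\<forall>B\<in>F. B \<subseteq> {0..<m} \<and> card B = w) \<and>
     (\<forall>g\<in>{1..<m}.
        (\<Sum>B\<in>F. card {(a, b). a \<in> B \<and> b \<in> B \<and> a \<noteq> b \<and>
                               (int a - int b) mod int m = int g}) = lam)"

end

theory Submission
  imports Defs "HOL-Number_Theory.Number_Theory"
begin

lemma field_pow_card:
  fixes a :: "'a::{field,finite}" assumes "a \<noteq> 0" shows "a ^ (CARD('a) - 1) = 1"
proof -
  let ?U = "UNIV - {0::'a}"
  have bij: "bij_betw (\<lambda>x. a*x) ?U ?U"
    by (rule bij_betwI[where g="\<lambda>x. x / a"]) (auto simp: assms)
  have "prod (\<lambda>x. x) ?U = prod (\<lambda>x. a*x) ?U"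
    using prod.reindex_bij_betw[OF bij, of "\<lambda>x. x"] by simp
  also have "\<dots> = a ^ card ?U * prod (\<lambda>x. x) ?U" by (simp add: prod.distrib)
  finally have "a ^ card ?U = 1"
    by (metis (no_types, lifting) DiffD2 finite_class.finite_UNIV finite_Diff insertI1 mult_cancel_right1 prod_zero_iff)
  moreover have "card ?U = CARD('a) - 1" by (simp add: card_Diff_singleton)
  ultimately show ?thesis by simp
qed

lemma alpha_bij:
  fixes \<alpha> :: "'a::{field,finite}"
  assumes "primitive_elem \<alpha>"
  shows "bij_betw (\<lambda>e. \<alpha>^e) {0..<CARD('a)-1} (UNIV - {0::'a})"
proof -
  let ?m = "CARD('a) - 1"
  have a0: "\<alpha> \<noteq> 0" using assms by (simp add: primitive_elem_def)
  have am: "\<alpha> ^ ?m = 1" using field_pow_card[OF a0] .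
  have cU: "card (UNIV - {0::'a}) = ?m" by (simp add: card_Diff_singleton)
  have "?m > 0" using cU a0
    by (metis DiffI UNIV_I card_gt_0_iff empty_iff finite_Diff finite_class.finite_UNIV singletonD)
  have img: "(\<lambda>e. \<alpha>^e) ` {0..<?m} = UNIV - {0}"
  proof
    show "(\<lambda>e. \<alpha>^e) ` {0..<?m} \<subseteq> UNIV - {0}" using a0 by auto
    show "UNIV - {0} \<subseteq> (\<lambda>e. \<alpha>^e) ` {0..<?m}"
    proof
      fix y assume "y \<in> (UNIV - {0::'a})"
      then obtain i where yi: "y = \<alpha> ^ i" using assms by (auto simp: primitive_elem_def)
      have "\<alpha> ^ i = \<alpha> ^ (?m * (i div ?m) + i mod ?m)" by simp
      also have "\<dots> = (\<alpha> ^ ?m) ^ (i div ?m) * \<alpha> ^ (i mod ?m)" by (simp only: power_add power_mult)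
      also have "\<dots> = \<alpha> ^ (i mod ?m)" by (simp only: am power_one mult_1)
      finally show "y \<in> (\<lambda>e. \<alpha>^e) ` {0..<?m}" using yi \<open>?m > 0\<close> by auto
    qed
  qed
  have "card ((\<lambda>e. \<alpha>^e) ` {0..<?m}) = card {0..<?m}"
    unfolding img cU by simp
  then have "inj_on (\<lambda>e. \<alpha>^e) {0..<?m}"
    by (rule eq_card_imp_inj_on[OF finite_atLeastLessThan])
  then show ?thesis using img by (simp add: bij_betw_def)
qed

lemma card_exps:
  fixes \<alpha> :: "'a::{field,finite}"
  assumes "primitive_elem \<alpha>" "CARD('a) = 2^n" "0 \<in> X"
  shows "card (exps n \<alpha> X) = card X - 1" and "exps n \<alpha> X \<subseteq> {0..<2^n-1}"
proof -
  have b: "bij_betw (\<lambda>e. \<alpha>^e) {0..<2^n-1} (UNIV - {0::'a})" using alpha_bij[OF assms(1)] assms(2) by simp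
  have sub: "exps n \<alpha> X \<subseteq> {0..<2^n-1}" by (auto simp: exps_def)
  then show "exps n \<alpha> X \<subseteq> {0..<2^n-1}" .
  have inj: "inj_on (\<lambda>e. \<alpha>^e) (exps n \<alpha> X)" using b sub by (meson bij_betw_def inj_on_subset)
  have "(\<lambda>e. \<alpha>^e) ` exps n \<alpha> X = X - {0}"
  proof
    show "(\<lambda>e. \<alpha>^e) ` exps n \<alpha> X \<subseteq> X - {0}" using b sub by (auto simp: exps_def bij_betw_def)
    show "X - {0} \<subseteq> (\<lambda>e. \<alpha>^e) ` exps n \<alpha> X"
    proof
      fix y assume y: "y \<in> X - {0}"
      then obtain e where "e \<in> {0..<2^n-1}" "y = \<alpha>^e" using b unfolding bij_betw_def by (metis DiffD2 DiffI UNIV_I image_iff)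
      then show "y \<in> (\<lambda>e. \<alpha>^e) ` exps n \<alpha> X" using y by (auto simp: exps_def)
    qed
  qed
  then have "card (exps n \<alpha> X) = card (X - {0})" using card_image[OF inj] by simp
  then show "card (exps n \<alpha> X) = card X - 1" using assms(3) by (simp add: card_Diff_singleton)
qed

lemma two_pow_cong: "[2^n = 1] (mod (2^n - 1 :: nat))"
  using cong_altdef_nat[of 1 "2^n" "2^n-1"] by simp

lemma coset_sub:
  fixes s s' u n :: nat
  assumes "[s' = 2^u * s] (mod (2^n - 1))" "n > 0"
  shows "{(s' * 2 ^ i) mod (2 ^ n - 1) | i. i < n} \<subseteq> {(s * 2 ^ i) mod (2 ^ n - 1) | i. i < n}"
proof
  fix x assume "x \<in> {(s' * 2 ^ i) mod (2 ^ n - 1) | i. i < n}"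
  then obtain i where i: "i < n" "x = (s' * 2 ^ i) mod (2 ^ n - 1)" by auto
  define j where "j = (u + i) mod n"
  define q where "q = (u + i) div n"
  have ui: "u + i = n * q + j" unfolding q_def j_def by simp
  have c1: "[s' * 2^i = (2^u * s) * 2^i] (mod (2^n - 1))" by (rule cong_mult[OF assms(1) cong_refl])
  have "(2::nat)^u * 2^i = 2^(u+i)" by (simp add: power_add)
  also have "\<dots> = (2^n)^q * 2^j" unfolding ui by (simp only: power_add power_mult)
  finally have e: "(2^u * s) * 2^i = s * ((2^n)^q * 2^j)" by (simp add: ac_simps)
  have c2: "[((2::nat)^n) ^ q = 1 ^ q] (mod (2^n - 1))" by (rule cong_pow[OF two_pow_cong])
  have c3: "[s * ((2^n)^q * 2^j) = s * (1^q * 2^j)] (mod (2^n - 1))"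
    by (rule cong_mult[OF cong_refl cong_mult[OF c2 cong_refl]])
  have "[s' * 2^i = s * (1^q * 2^j)] (mod (2^n - 1))" using c1 c3 unfolding e by (rule cong_trans)
  then have "[s' * 2^i = s * 2^j] (mod (2^n - 1))" by simp
  then have "x = (s * 2^j) mod (2^n - 1)" using i by (simp add: cong_def)
  moreover have "j < n" using assms(2) unfolding j_def by simp
  ultimately show "x \<in> {(s * 2 ^ i) mod (2 ^ n - 1) | i. i < n}" by blast
qed

lemma cyc_rho_eq:
  fixes s s' u v n :: nat
  assumes "[s' = 2^u * s] (mod (2^n - 1))" "[s = 2^v * s'] (mod (2^n - 1))" "n > 0"
  shows "cyc_rho n s = cyc_rho n s'"
proof -
  have "{(s * 2 ^ i) mod (2 ^ n - 1) | i. i < n} = {(s' * 2 ^ i) mod (2 ^ n - 1) | i. i < n}"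
    using coset_sub[OF assms(1,3)] coset_sub[OF assms(2,3)] by (rule subset_antisym[rotated])
  then show ?thesis unfolding cyc_rho_def by simp
qed

lemma offdiag_card:
  assumes "finite E"
  shows "card {(a,b). a \<in> E \<and> b \<in> E \<and> a \<noteq> b} = card E * (card E - 1)"
proof -
  have "{(a,b). a \<in> E \<and> b \<in> E \<and> a \<noteq> b} = Sigma E (\<lambda>a. E - {a})" by auto
  then show ?thesis using assms by (simp add: card_Diff_singleton)
qed

lemma cop2:
  assumes "n > 0" shows "coprime ((2::nat)^j) (2^n - 1)"
proof -
  have "odd ((2::nat)^n - 1)" using assms by (simp add: even_diff_nat)
  then have "coprime (2::nat) (2^n - 1)" by simp
  then show ?thesis by (simp add: coprime_power_left_iff)
qed

lemma orbit_aux: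
  fixes s n t :: nat
  assumes "prime n" "0 < t" "t < n" "0 < s" "s < 2^n - 1" "[s = 2^t * s] (mod (2^n - 1))"
  shows False
proof -
  let ?m = "(2::nat)^n - 1"
  have "2^t * s \<ge> s" by simp
  then have "?m dvd (2^t * s - s)" using assms(6) by (metis cong_altdef_nat cong_sym)
  also have "2^t * s - s = s * (2^t - 1)" by (simp add: algebra_simps)
  finally have d: "?m dvd s * (2^t - 1)" .
  define g where "g = gcd s ?m"
  define e where "e = ?m div g"
  define s1 where "s1 = s div g"
  have gpos: "g > 0" using assms(4) by (simp add: g_def)
  have me: "?m = g * e" by (simp add: e_def g_def)
  have ss: "s = g * s1" by (simp add: s1_def g_def)
  have cop: "coprime e s1" unfolding e_def s1_def g_def
    by (metis assms(4) div_gcd_coprime gcd.commute not_gr_zero)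
  have "g * e dvd g * (s1 * (2^t - 1))" using d me ss by (simp add: mult.assoc)
  then have "e dvd s1 * (2^t - 1)" using gpos by simp
  then have e1: "e dvd 2^t - 1" using cop by (simp add: coprime_dvd_mult_right_iff)
  have e2: "e dvd 2^n - 1" using me by simp
  have c1: "[2^t = 1] (mod e)" using e1 by (simp add: cong_altdef_nat)
  have c2: "[2^n = 1] (mod e)" using e2 by (simp add: cong_altdef_nat)
  have o1: "ord e 2 dvd t" and o2: "ord e 2 dvd n" using c1 c2 ord_divides by blast+
  have "coprime t n" using assms(1-3)
    by (metis coprime_commute dvd_imp_le not_le prime_imp_coprime_nat)
  have "ord e 2 dvd gcd t n" using o1 o2 by (rule gcd_greatest)
  then have "ord e 2 dvd 1" using \<open>coprime t n\<close> by simp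
  then have "ord e 2 = 1" by simp
  then have "[2 = 1] (mod e)" by (metis One_nat_def ord_eq_Suc_0_iff)
  then have "e dvd 1" using cong_altdef_nat[of 1 2 e] by simp
  then have "e = 1" by simp
  then have "?m dvd s" using me ss by simp
  then show False using assms(4,5) nat_dvd_not_less by blast
qed

lemma orbit_inj:
  fixes s n l l' :: nat
  assumes "prime n" "l < n" "l' < n" "0 < s" "s < 2^n - 1" "[2^l * s = 2^l' * s] (mod (2^n - 1))"
  shows "l = l'"
proof (rule ccontr)
  assume ne: "l \<noteq> l'"
  have cop: "\<And>j. coprime ((2::nat)^j) (2^n - 1)"
    using cop2 assms(1) prime_gt_0_nat by blast
  have key: "\<And>a b. a < b \<Longrightarrow> b < n \<Longrightarrow> [2^a * s = 2^b * s] (mod (2^n - 1)) \<Longrightarrow> False"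
  proof -
    fix a b assume ab: "a < b" "b < n" and c: "[2^a * s = 2^b * s] (mod (2^n - 1))"
    have eq: "(2::nat)^b * s = 2^a * (2^(b-a) * s)" using ab by (simp add: power_add[symmetric])
    have "[2^a * s = 2^a * (2^(b-a) * s)] (mod (2^n - 1))" using c unfolding eq .
    then have "[s = 2^(b-a) * s] (mod (2^n - 1))" using cop[of a] cong_mult_lcancel_nat by blast
    moreover have "b - a < n" "0 < b - a" using ab by linarith+
    ultimately show False using orbit_aux[of n "b-a" s] assms by blast
  qed
  show False
  proof (cases "l < l'")
    case True then show ?thesis using key assms by blast
  next
    case False then have "l' < l" using ne by simp
    then show ?thesis using key assms cong_sym by blast
  qed
qed


lemma sd_pos:
  fixes a b m :: nat
  assumes "a < m" "b < m" "a \<noteq> b"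
  shows "0 < nat ((int a - int b) mod int m)"
proof (rule ccontr)
  assume "\<not> 0 < nat ((int a - int b) mod int m)"
  moreover have "(int a - int b) mod int m \<ge> 0" using assms(1) by simp
  ultimately have "(int a - int b) mod int m = 0" by simp
  then have "[int a = int b] (mod int m)" by (simp add: cong_iff_dvd_diff mod_eq_0_iff_dvd)
  then have "[a = b] (mod m)" by (simp add: cong_int_iff)
  then show False using assms cong_less_modulus_unique_nat by blast
qed

lemma mu_inj:
  fixes m l :: nat
  assumes "coprime ((2::nat)^l) m"
  shows "inj_on (\<lambda>e. e * 2^l mod m) {0..<m}"
proof
  fix x y assume xy: "x \<in> {0..<m}" "y \<in> {0..<m}" "x * 2^l mod m = y * 2^l mod m"
  then have "[x * 2^l = y * 2^l] (mod m)" by (simp add: cong_def)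
  then have "[x = y] (mod m)" by (rule cong_mult_rcancel_nat[OF assms, THEN iffD1])
  moreover have "x < m" "y < m" using xy(1,2) by auto
  ultimately show "x = y" by (rule cong_less_modulus_unique_nat)
qed

theorem theorem4:
  fixes \<alpha> :: "'a::{field,finite}" and n k N :: nat and X :: "nat \<Rightarrow> 'a set"
  assumes "prime n"
    and "CARD('a) = 2 ^ n"
    and "(1::'a) + 1 = 0"
    and "primitive_elem \<alpha>"
    and "k \<ge> 2"
    and "N * ((2 ^ k - 1) * (2 ^ k - 2) * n) = 2 ^ n - 2"
    and "\<forall>i<N. f2_subspace_dim (X i) k \<and> coset_complete n k \<alpha> (X i)"
    and "\<forall>i<N. \<forall>j<N. i \<noteq> j \<longrightarrow> rho_Delta n \<alpha> (X i) \<inter> rho_Delta n \<alpha> (X j) = {}"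
    and "steiner_structure k
           {(\<lambda>x. \<alpha> ^ j * x ^ (2 ^ l)) ` X i | i l j. i < N \<and> l < n \<and> j < 2 ^ n - 1}"
  shows "\<exists>F. difference_family (2 ^ n - 1) (2 ^ k - 1) 1 F"
proof -
  define m where "m = (2::nat)^n - 1"
  have n2: "n \<ge> 2" using assms(1) prime_ge_2_nat by blast
  have "(2::nat)^2 \<le> 2^n" using n2 by (rule power_increasing) simp
  then have m3: "m \<ge> 3" unfolding m_def by simp
  have intm: "int m = 2^n - 1" unfolding m_def using m3 m_def by (simp add: of_nat_diff)
  have cop: "\<And>l. coprime ((2::nat)^l) m" unfolding m_def using cop2 n2 by simp
  have pow_n: "[2^n = 1] (mod m)" unfolding m_def by (rule two_pow_cong)
  define c where "c = (2::nat)^k - 1"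
  have "(2::nat)^2 \<le> 2^k" using assms(5) by (rule power_increasing) simp
  then have c3: "c \<ge> 3" unfolding c_def by simp
  define E where "E = (\<lambda>i. exps n \<alpha> (X i))"
  define P where "P = (\<lambda>i. {(a,b). a \<in> E i \<and> b \<in> E i \<and> a \<noteq> b})"
  define sd where "sd = (\<lambda>a b. nat ((int a - int b) mod int m))"
  define D where "D = (\<lambda>l a b. (2^l * sd a b) mod m)"
  define mu where "mu = (\<lambda>l e. e * 2^l mod m)"
  have Esub: "\<And>i. i < N \<Longrightarrow> E i \<subseteq> {0..<m}"
    using card_exps(2)[OF assms(4,2)] assms(7) unfolding E_def m_def f2_subspace_dim_def f2_subspace_def by blast
  have Ecard: "\<And>i. i < N \<Longrightarrow> card (E i) = c"
    using card_exps(1)[OF assms(4,2)] assms(7) unfolding E_def c_def f2_subspace_dim_def f2_subspace_def by simp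
  have Efin: "\<And>i. i < N \<Longrightarrow> finite (E i)" using Esub finite_subset by blast
  have Pcard: "\<And>i. i < N \<Longrightarrow> card (P i) = (2^k - 1) * (2^k - 2)"
  proof -
    fix i assume i: "i < N"
    have "card (P i) = card (E i) * (card (E i) - 1)" unfolding P_def by (rule offdiag_card[OF Efin[OF i]])
    also have "\<dots> = c * (c - 1)" using Ecard[OF i] by simp
    also have "c - 1 = 2^k - 2" unfolding c_def by simp
    finally show "card (P i) = (2^k - 1) * (2^k - 2)" unfolding c_def .
  qed
  have Pfin: "\<And>i. i < N \<Longrightarrow> finite (P i)"
  proof -
    fix i assume i: "i < N"
    have "P i \<subseteq> E i \<times> E i" unfolding P_def by auto
    then show "finite (P i)" using Efin[OF i] finite_subset by blast
  qed
  have rhoD: "\<And>i. rho_Delta n \<alpha> (X i) = (\<lambda>(a,b). cyc_rho n (sd a b)) ` P i"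
    unfolding rho_Delta_def P_def E_def sd_def intm[symmetric] by auto
  have rinj: "\<And>i. i < N \<Longrightarrow> inj_on (\<lambda>(a,b). cyc_rho n (sd a b)) (P i)"
  proof -
    fix i assume i: "i < N"
    have "card ((\<lambda>(a,b). cyc_rho n (sd a b)) ` P i) = card (P i)"
      using assms(7) i rhoD Pcard unfolding coset_complete_def by simp
    then show "inj_on (\<lambda>(a,b). cyc_rho n (sd a b)) (P i)"
      by (rule eq_card_imp_inj_on[OF Pfin[OF i]])
  qed
  have sdpos: "\<And>i a b. i < N \<Longrightarrow> (a,b) \<in> P i \<Longrightarrow> 0 < sd a b \<and> sd a b < m"
  proof -
    fix i a b assume i: "i < N" and ab: "(a,b) \<in> P i"
    then have "a < m" "b < m" "a \<noteq> b" using Esub[OF i] unfolding P_def by auto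
    then have "0 < sd a b" unfolding sd_def by (rule sd_pos)
    moreover have "sd a b < m" unfolding sd_def using m3
      by (simp add: nat_less_iff)
    ultimately show "0 < sd a b \<and> sd a b < m" by simp
  qed
  have intsd: "\<And>a b. int (sd a b) = (int a - int b) mod int m"
    unfolding sd_def using m3 by simp
  have intD: "\<And>l a b. int (D l a b) = (2^l * (int a - int b)) mod int m"
  proof -
    fix l a b
    have "int (D l a b) = (2^l * int (sd a b)) mod int m" unfolding D_def by (simp add: of_nat_mod)
    also have "\<dots> = (2^l * ((int a - int b) mod int m)) mod int m" by (simp add: intsd)
    also have "\<dots> = (2^l * (int a - int b)) mod int m" by (simp add: mod_mult_right_eq)
    finally show "int (D l a b) = (2^l * (int a - int b)) mod int m" .
  qed
  have intmu: "\<And>l a b. (int (mu l a) - int (mu l b)) mod int m = int (D l a b)"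
  proof -
    fix l a b
    have "(int (mu l a) - int (mu l b)) mod int m = ((int a * 2^l) mod int m - (int b * 2^l) mod int m) mod int m"
      unfolding mu_def by (simp add: of_nat_mod)
    also have "\<dots> = (int a * 2^l - int b * 2^l) mod int m" by (simp add: mod_diff_eq)
    also have "\<dots> = (2^l * (int a - int b)) mod int m" by (simp add: algebra_simps)
    finally show "(int (mu l a) - int (mu l b)) mod int m = int (D l a b)" using intD by simp
  qed
  define I where "I = {0..<N} \<times> {0..<n}"
  define T where "T = Sigma I (\<lambda>il. P (fst il))"
  define Df where "Df = (\<lambda>(il::nat\<times>nat, ab::nat\<times>nat). D (snd il) (fst ab) (snd ab))"
  have Tfin: "finite T" unfolding T_def I_def using Pfin by (auto intro!: finite_SigmaI)
  have Drange: "Df ` T \<subseteq> {1..<m}"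
  proof
    fix x assume "x \<in> Df ` T"
    then obtain i l a b where t: "i < N" "l < n" "(a,b) \<in> P i" "x = D l a b"
      unfolding T_def I_def Df_def by auto
    have s: "0 < sd a b" "sd a b < m" using sdpos t by auto
    have "D l a b \<noteq> 0"
    proof
      assume "D l a b = 0"
      then have "m dvd 2^l * sd a b" unfolding D_def by (simp add: dvd_eq_mod_eq_0)
      moreover have "coprime m (2^l)" using cop[of l] by (simp add: coprime_commute)
      ultimately have "m dvd sd a b" using coprime_dvd_mult_right_iff by blast
      then show False using s nat_dvd_not_less by blast
    qed
    moreover have "D l a b < m" unfolding D_def using m3 by simp
    ultimately show "x \<in> {1..<m}" using t by simp
  qed
  have Dinj: "inj_on Df T"
  proof
    fix t t' assume tT: "t \<in> T" and tT': "t' \<in> T" and eq: "Df t = Df t'"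
    obtain i l a b where t: "t = ((i,l),(a,b))" "i < N" "l < n" "(a,b) \<in> P i"
      using tT unfolding T_def I_def by auto
    obtain i' l' a' b' where t': "t' = ((i',l'),(a',b'))" "i' < N" "l' < n" "(a',b') \<in> P i'"
      using tT' unfolding T_def I_def by auto
    define s where "s = sd a b"
    define s' where "s' = sd a' b'"
    have c0: "[2^l * s = 2^l' * s'] (mod m)"
      using eq unfolding t t' Df_def D_def s_def s'_def by (simp add: cong_def)
    have swap: "\<And>l l' s s'. l' < n \<Longrightarrow> [2^l * s = 2^l' * s'] (mod m) \<Longrightarrow> [s' = 2^(n-l'+l) * s] (mod m)"
    proof -
      fix l l' s s' :: nat assume l': "l' < n" and cc: "[2^l * s = 2^l' * s'] (mod m)"
      have "2^(n-l'+l) * s = 2^(n-l') * (2^l * s)" by (simp add: power_add)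
      also have "[2^(n-l') * (2^l * s) = 2^(n-l') * (2^l' * s')] (mod m)" using cc by (simp add: cong_mult)
      also have "2^(n-l') * (2^l' * s') = 2^n * s'" using l' by (simp add: power_add[symmetric] mult.assoc[symmetric])
      also have "[2^n * s' = 1 * s'] (mod m)" by (rule cong_mult[OF pow_n cong_refl])
      finally have "[2^(n-l'+l) * s = 1 * s'] (mod m)" .
      then have "[1 * s' = 2^(n-l'+l) * s] (mod m)" by (rule cong_sym)
      then show "[s' = 2^(n-l'+l) * s] (mod m)" by simp
    qed
    have c1: "[s' = 2^(n-l'+l) * s] (mod m)" using swap[OF t'(3) c0] .
    have c2: "[s = 2^(n-l+l') * s'] (mod m)" using swap[OF t(3) cong_sym[OF c0]] .
    have req: "cyc_rho n s = cyc_rho n s'"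
      using cyc_rho_eq[of s' _ s n, folded m_def, OF c1 c2] n2 by simp
    have "cyc_rho n s \<in> rho_Delta n \<alpha> (X i)" unfolding rhoD s_def using t(4) by force
    moreover have "cyc_rho n s \<in> rho_Delta n \<alpha> (X i')" unfolding rhoD req s'_def using t'(4) by force
    ultimately have ii: "i = i'" using assms(8) t(2) t'(2) by blast
    have "(a,b) = (a',b')"
      using rinj[OF t(2)] t(4) t'(4) req unfolding ii s_def s'_def inj_on_def by force
    then have ab: "a = a'" "b = b'" by auto
    then have ss: "s = s'" unfolding s_def s'_def by simp
    have "0 < s" "s < m" using sdpos[OF t(2,4)] unfolding s_def by auto
    then have "l = l'" using orbit_inj[of n l l' s, folded m_def] assms(1) t(3) t'(3) c0 ss by blast
    then show "t = t'" using t t' ii ab by simp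
  qed
  have cardI: "card I = N * n" unfolding I_def by (simp add: card_cartesian_product)
  have cardT: "card T = m - 1"
  proof -
    have "card T = (\<Sum>il\<in>I. card (P (fst il)))" unfolding T_def
      by (rule card_SigmaI) (auto simp: I_def intro: Pfin)
    also have "\<dots> = (\<Sum>il\<in>I. (2^k - 1) * (2^k - 2))"
      by (rule sum.cong) (auto simp: I_def Pcard)
    also have "\<dots> = N * n * ((2^k - 1) * (2^k - 2))" by (simp add: cardI)
    also have "\<dots> = m - 1" using assms(6) unfolding m_def by (simp add: algebra_simps)
    finally show ?thesis .
  qed
  have "card (Df ` T) = card {1..<m}" using card_image[OF Dinj] cardT by simp
  then have Dimg: "Df ` T = {1..<m}"
    by (rule card_subset_eq[OF finite_atLeastLessThan Drange])
  define blk where "blk = (\<lambda>il::nat\<times>nat. mu (snd il) ` E (fst il))"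
  have muinj: "\<And>l i. i < N \<Longrightarrow> inj_on (mu l) (E i)"
  proof -
    fix l i assume i: "i < N"
    have "inj_on (\<lambda>e. e * 2^l mod m) {0..<m}" by (rule mu_inj[OF cop])
    then have "inj_on (mu l) {0..<m}" unfolding mu_def .
    then show "inj_on (mu l) (E i)" using Esub[OF i] by (rule inj_on_subset)
  qed
  have mulim: "\<And>l e. mu l e < m" unfolding mu_def using m3 by simp
  have blkinj: "inj_on blk I"
  proof
    fix il il' assume il: "il \<in> I" and il': "il' \<in> I" and eq: "blk il = blk il'"
    obtain i l where ild: "il = (i,l)" "i < N" "l < n" using il unfolding I_def by auto
    obtain i' l' where ild': "il' = (i',l')" "i' < N" "l' < n" using il' unfolding I_def by auto
    have h4: "(4::nat) \<le> 2^k" using c3 unfolding c_def by linarith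
    have "card (P i) > 0" using Pcard[OF ild(2)] h4 by simp
    then have "P i \<noteq> {}" by auto
    then obtain p where p: "p \<in> P i" by blast
    obtain a b where "p = (a,b)" by (cases p)
    then have ab: "(a,b) \<in> P i" using p by simp
    then have "mu l a \<in> blk il'" "mu l b \<in> blk il'" using eq unfolding blk_def ild P_def by auto
    then obtain a' b' where a': "a' \<in> E i'" "mu l a = mu l' a'" and b': "b' \<in> E i'" "mu l b = mu l' b'"
      unfolding blk_def ild' by auto
    have "mu l a \<noteq> mu l b" using ab muinj[OF ild(2)] unfolding P_def inj_on_def by auto
    then have abP: "(a',b') \<in> P i'" using a' b' unfolding P_def by auto
    have "int (D l a b) = (int (mu l a) - int (mu l b)) mod int m" using intmu by simp
    also have "\<dots> = (int (mu l' a') - int (mu l' b')) mod int m" using a'(2) b'(2) by simp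
    also have "\<dots> = int (D l' a' b')" using intmu by simp
    finally have "D l a b = D l' a' b'" by simp
    then have "Df ((i,l),(a,b)) = Df ((i',l'),(a',b'))" unfolding Df_def by simp
    moreover have "((i,l),(a,b)) \<in> T" "((i',l'),(a',b')) \<in> T"
      using ab abP ild ild' unfolding T_def I_def by auto
    ultimately have "((i,l),(a,b)) = ((i',l'),(a',b'))" by (rule inj_onD[OF Dinj])
    then show "il = il'" using ild ild' by simp
  qed
  define F where "F = blk ` I"
  have fiber: "\<And>il g. il \<in> I \<Longrightarrow>
      card {(x, y). x \<in> blk il \<and> y \<in> blk il \<and> x \<noteq> y \<and> (int x - int y) mod int m = int g}
      = card {p \<in> P (fst il). D (snd il) (fst p) (snd p) = g}"
  proof -
    fix il g assume il: "il \<in> I"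
    obtain i l where ild: "il = (i,l)" "i < N" using il unfolding I_def by auto
    let ?f = "\<lambda>(a,b). (mu l a, mu l b)"
    have "{(x, y). x \<in> blk il \<and> y \<in> blk il \<and> x \<noteq> y \<and> (int x - int y) mod int m = int g}
        = ?f ` {p \<in> P i. D l (fst p) (snd p) = g}"
    proof
      show "{(x, y). x \<in> blk il \<and> y \<in> blk il \<and> x \<noteq> y \<and> (int x - int y) mod int m = int g}
          \<subseteq> ?f ` {p \<in> P i. D l (fst p) (snd p) = g}"
      proof
        fix xy assume "xy \<in> {(x, y). x \<in> blk il \<and> y \<in> blk il \<and> x \<noteq> y \<and> (int x - int y) mod int m = int g}"
        then obtain a b where ab: "a \<in> E i" "b \<in> E i" "xy = (mu l a, mu l b)" "mu l a \<noteq> mu l b"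
            "(int (mu l a) - int (mu l b)) mod int m = int g"
          unfolding blk_def ild by auto
        then have "D l a b = g" using intmu by simp
        moreover have "a \<noteq> b" using ab by auto
        ultimately show "xy \<in> ?f ` {p \<in> P i. D l (fst p) (snd p) = g}"
          using ab unfolding P_def by (auto intro!: image_eqI[of _ _ "(a,b)"])
      qed
      show "?f ` {p \<in> P i. D l (fst p) (snd p) = g}
          \<subseteq> {(x, y). x \<in> blk il \<and> y \<in> blk il \<and> x \<noteq> y \<and> (int x - int y) mod int m = int g}"
      proof
        fix xy assume "xy \<in> ?f ` {p \<in> P i. D l (fst p) (snd p) = g}"
        then obtain a b where ab: "a \<in> E i" "b \<in> E i" "a \<noteq> b" "D l a b = g" "xy = (mu l a, mu l b)"
          unfolding P_def by auto
        have "mu l a \<noteq> mu l b" using ab muinj[OF ild(2)] unfolding inj_on_def by metis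
        then show "xy \<in> {(x, y). x \<in> blk il \<and> y \<in> blk il \<and> x \<noteq> y \<and> (int x - int y) mod int m = int g}"
          using ab intmu[of l a b] unfolding blk_def ild by auto
      qed
    qed
    moreover have "inj_on ?f {p \<in> P i. D l (fst p) (snd p) = g}"
      using muinj[OF ild(2)] unfolding inj_on_def P_def by auto
    ultimately show "card {(x, y). x \<in> blk il \<and> y \<in> blk il \<and> x \<noteq> y \<and> (int x - int y) mod int m = int g}
      = card {p \<in> P (fst il). D (snd il) (fst p) (snd p) = g}"
      using card_image ild by simp
  qed
  have "difference_family m (2 ^ k - 1) 1 F"
    unfolding difference_family_def
  proof (intro conjI ballI)
    show "finite F" unfolding F_def I_def by simp
  next
    fix B assume "B \<in> F"
    then obtain i l where B: "B = mu l ` E i" "i < N" unfolding F_def blk_def I_def by auto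
    show "B \<subseteq> {0..<m}" using B mulim by auto
    show "card B = 2^k - 1" using B card_image[OF muinj[OF B(2)]] Ecard[OF B(2)] unfolding c_def by simp
  next
    fix g assume g: "g \<in> {1..<m}"
    have "(\<Sum>B\<in>F. card {(a, b). a \<in> B \<and> b \<in> B \<and> a \<noteq> b \<and> (int a - int b) mod int m = int g})
        = (\<Sum>il\<in>I. card {(a, b). a \<in> blk il \<and> b \<in> blk il \<and> a \<noteq> b \<and> (int a - int b) mod int m = int g})"
      unfolding F_def by (rule sum.reindex[OF blkinj, unfolded comp_def])
    also have "\<dots> = (\<Sum>il\<in>I. card {p \<in> P (fst il). D (snd il) (fst p) (snd p) = g})"
      by (rule sum.cong) (simp_all add: fiber)
    also have "\<dots> = card (Sigma I (\<lambda>il. {p \<in> P (fst il). D (snd il) (fst p) (snd p) = g}))"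
      by (rule card_SigmaI[symmetric]) (auto simp: I_def intro: rev_finite_subset[OF Pfin])
    also have "Sigma I (\<lambda>il. {p \<in> P (fst il). D (snd il) (fst p) (snd p) = g}) = {t \<in> T. Df t = g}"
      unfolding T_def Df_def by auto
    also have "card {t \<in> T. Df t = g} = 1"
    proof -
      have "g \<in> Df ` T" using g Dimg by simp
      then obtain t0 where t0: "t0 \<in> T" "Df t0 = g" by auto
      have uq: "\<And>t. t \<in> T \<Longrightarrow> Df t = g \<Longrightarrow> t = t0"
      proof -
        fix t assume "t \<in> T" "Df t = g"
        then have "Df t = Df t0" "t \<in> T" using t0 by auto
        then show "t = t0" using t0(1) inj_onD[OF Dinj] by blast
      qed
      have "{t \<in> T. Df t = g} = {t0}" using t0 uq by blast
      then show ?thesis by simp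
    qed
    finally show "(\<Sum>B\<in>F. card {(a, b). a \<in> B \<and> b \<in> B \<and> a \<noteq> b \<and> (int a - int b) mod int m = int g}) = 1" .
  qed
  then show ?thesis unfolding m_def by blast
qed

end
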